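(* Let $n,k,i$ be integers with $n\ge k\ge1$ and $0\le i\le n-k$, and let $(\pi_1,\pi_2,\pi_3)\in\mathcal B_{n,k}^{(i)}$. Then (i) $|\min(\pi_1)\cap\min(\pi_3)|=k$; (ii) $|\mathrm{Sing}(\pi_1)\setminus\min(\pi_3)|=i$; (iii) $|\mathrm{Sing}(\pi_3)\setminus\min(\pi_1)|=n-k-i$.
   Context: Let $[n]=\{1,\dots,n\}$ and let $\Pi_{n,m}$ denote the set of partitions of $[n]$ into $m$ nonempty blocks. For a partition $\pi$, $\min(\pi)$ is the set of minima of its blocks and $\mathrm{Sing}(\pi)$ is the set of elements forming singleton blocks of $\pi$. $\mathcal B_{n,k}^{(i)}$ is the set of triples $(\pi_1,\pi_2,\pi_3)\in\Pi_{n,k+i}\times\Pi_{n,k+i}\times\Pi_{n,n-i}$ such that (i) $\min(\pi_1)=\min(\pi_2)$ and $\mathrm{Sing}(\pi_1)=\mathrm{Sing}(\pi_2)$, and (ii) $\min(\pi_1)\cup\mathrm{Sing}(\pi_3)=\mathrm{Sing}(\pi_1)\cup\min(\pi_3)=[n]$. *)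

theory Defs
  imports Main "HOL-Library.Disjoint_Sets"
begin

definition Pi_part :: "nat \<Rightarrow> nat \<Rightarrow> nat set set set" where
  "Pi_part n m = {P. partition_on {1..n} P \<and> card P = m}"

definition mins :: "nat set set \<Rightarrow> nat set" where
  "mins P = Min ` P"

definition Sing :: "nat set set \<Rightarrow> nat set" where
  "Sing P = {x. {x} \<in> P}"

definition B_set :: "nat \<Rightarrow> nat \<Rightarrow> nat \<Rightarrow> (nat set set \<times> nat set set \<times> nat set set) set" where
  "B_set n k i = {(p1, p2, p3).
     p1 \<in> Pi_part n (k + i) \<and> p2 \<in> Pi_part n (k + i) \<and> p3 \<in> Pi_part n (n - i) \<and>
     mins p1 = mins p2 \<and> Sing p1 = Sing p2 \<and>
     mins p1 \<union> Sing p3 = {1..n} \<and> Sing p1 \<union> mins p3 = {1..n}}"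

end

theory Submission
  imports Defs
begin

lemma part_facts:
  assumes "partition_on {1..n} P"
  shows "card (mins P) = card P" "mins P \<subseteq> {1..n}" "Sing P \<subseteq> mins P"
proof -
  have fin: "\<And>A. A \<in> P \<Longrightarrow> finite A \<and> A \<noteq> {} \<and> A \<subseteq> {1..n}"
    using assms unfolding partition_on_def
    by (metis Union_upper finite_atLeastAtMost finite_subset)
  have mem: "\<And>A. A \<in> P \<Longrightarrow> Min A \<in> A" using fin Min_in by blast
  have "inj_on Min P"
  proof (rule inj_onI)
    fix A B assume AB: "A \<in> P" "B \<in> P" "Min A = Min B"
    then have "Min A \<in> A \<inter> B" using mem[OF AB(1)] mem[OF AB(2)] AB(3) by simp
    then show "A = B" using assms AB unfolding partition_on_def disjoint_def by blast
  qed
  then show "card (mins P) = card P" unfolding mins_def by (simp add: card_image)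
  show "mins P \<subseteq> {1..n}" unfolding mins_def using mem fin by blast
  show "Sing P \<subseteq> mins P" unfolding mins_def Sing_def
    by (auto intro!: image_eqI[where x="{_}"])
qed

theorem lemma12:
  fixes n k i :: nat and p1 p2 p3 :: "nat set set"
  assumes "1 \<le> k" and "k \<le> n" and "i \<le> n - k"
    and "(p1, p2, p3) \<in> B_set n k i"
  shows "card (mins p1 \<inter> mins p3) = k \<and>
         card (Sing p1 - mins p3) = i \<and>
         card (Sing p3 - mins p1) = n - k - i"
proof -
  let ?U = "{1..n::nat}"
  have p1: "partition_on ?U p1" "card p1 = k + i"
   and p3: "partition_on ?U p3" "card p3 = n - i"
   and c1: "mins p1 \<union> Sing p3 = ?U" and c2: "Sing p1 \<union> mins p3 = ?U"
    using assms(4) unfolding B_set_def Pi_part_def by auto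
  note f1 = part_facts[OF p1(1)] and f3 = part_facts[OF p3(1)]
  have cM1: "card (mins p1) = k + i" using f1 p1 by simp
  have cM3: "card (mins p3) = n - i" using f3 p3 by simp
  have e2: "Sing p1 - mins p3 = ?U - mins p3" using c2 f1 by blast
  have e3: "Sing p3 - mins p1 = ?U - mins p1" using c1 f3 by blast
  have e1: "mins p1 \<inter> mins p3 = mins p1 - (?U - mins p3)" using f1 by blast
  have sub: "?U - mins p3 \<subseteq> mins p1" using c2 f1 by blast
  have fU: "finite (mins p1)" "finite (mins p3)" using f1 f3 finite_subset by blast+
  have a2: "card (?U - mins p3) = i"
    using card_Diff_subset[OF fU(2) f3(2)] cM3 assms by simp
  have a3: "card (?U - mins p1) = n - k - i"
    using card_Diff_subset[OF fU(1) f1(2)] cM1 assms by simp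
  have a1: "card (mins p1 \<inter> mins p3) = k"
    unfolding e1 using card_Diff_subset[OF finite_subset[OF sub fU(1)] sub] cM1 a2 by simp
  show ?thesis using a1 a2 a3 e2 e3 by simp
qed

end
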